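(* Let $W_{12}=\{(0,0,0),(0,0,1),(0,1,0),(1,0,0)\}\subseteq\{0,1\}^3$. Then $\Lambda(W_{12},3)=1$ and, for every integer $n\ge 4$, $$\Lambda(W_{12},n)=\frac12\binom n3 2^{n-3}.$$
   Context: The $n$-hypercube $Q_n$ is the graph on $\{0,1\}^n$ in which two sequences are adjacent iff they differ in exactly one coordinate. A $3$-subcube of $\{0,1\}^n$ is a set $C\subseteq\{0,1\}^n$ obtained by fixing $n-3$ coordinates to constant values and letting the remaining $3$ coordinates vary arbitrarily (equivalently, $Q_n[C]\cong Q_3$). For $H\subseteq\{0,1\}^3$ and $S\subseteq\{0,1\}^n$, a $3$-subcube $C$ gives a copy of $H$ in $S$ if there is a graph isomorphism $f$ from $Q_3$ to $Q_n[C]$ with $f(H)=S\cap C$. Let $\Lambda(H,S)$ be the number of $3$-subcubes giving a copy of $H$ in $S$, and $\Lambda(H,n)=\max\{\Lambda(H,S): S\subseteq\{0,1\}^n\}$ for $n\ge 3$. *)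

theory Defs
  imports Complex_Main
begin

text \<open>Vertices of the n-hypercube: boolean lists of length n (True = 1, False = 0).\<close>
definition cube :: "nat \<Rightarrow> bool list set" where
  "cube n = {xs. length xs = n}"

definition adj :: "nat \<Rightarrow> bool list \<Rightarrow> bool list \<Rightarrow> bool" where
  "adj n x y \<longleftrightarrow> card {i. i < n \<and> x ! i \<noteq> y ! i} = 1"

definition is_3subcube :: "nat \<Rightarrow> bool list set \<Rightarrow> bool" where
  "is_3subcube n C \<longleftrightarrow> (\<exists>I base. I \<subseteq> {..<n} \<and> card I = 3 \<and> base \<in> cube n \<and>
      C = {x \<in> cube n. \<forall>i<n. i \<notin> I \<longrightarrow> x ! i = base ! i})"

definition cube_iso :: "nat \<Rightarrow> bool list set \<Rightarrow> (bool list \<Rightarrow> bool list) \<Rightarrow> bool" where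
  "cube_iso n C f \<longleftrightarrow> bij_betw f (cube 3) C \<and>
     (\<forall>x\<in>cube 3. \<forall>y\<in>cube 3. adj 3 x y \<longleftrightarrow> adj n (f x) (f y))"

definition gives_copy :: "nat \<Rightarrow> bool list set \<Rightarrow> bool list set \<Rightarrow> bool list set \<Rightarrow> bool" where
  "gives_copy n H S C \<longleftrightarrow> (\<exists>f. cube_iso n C f \<and> f ` H = S \<inter> C)"

definition Lambda_set :: "nat \<Rightarrow> bool list set \<Rightarrow> bool list set \<Rightarrow> nat" where
  "Lambda_set n H S = card {C. is_3subcube n C \<and> gives_copy n H S C}"

definition Lambda :: "bool list set \<Rightarrow> nat \<Rightarrow> nat" where
  "Lambda H n = Max {Lambda_set n H S | S. S \<subseteq> cube n}"

definition W12 :: "bool list set" where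
  "W12 = {[False,False,False], [False,False,True], [False,True,False], [True,False,False]}"

end

theory Submission
  imports Defs
begin


definition flip :: "bool list \<Rightarrow> nat \<Rightarrow> bool list" where
  "flip x i = x[i := (\<not> x!i)]"
definition subc :: "nat \<Rightarrow> bool option list \<Rightarrow> bool list set" where
  "subc n p = {x \<in> cube n. \<forall>i<n. \<forall>b. p!i = Some b \<longrightarrow> x!i = b}"
definition freep :: "bool option list \<Rightarrow> nat set" where
  "freep p = {i. i < length p \<and> p!i = None}"
definition pats :: "nat \<Rightarrow> nat \<Rightarrow> bool option list set" where
  "pats n k = {p. length p = n \<and> card (freep p) = k}"
definition star :: "nat \<Rightarrow> bool option list \<Rightarrow> bool list set \<Rightarrow> bool" where
  "star n p S \<longleftrightarrow> (\<exists>v\<in>subc n p. S \<inter> subc n p = insert v (flip v ` freep p))"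
definition fill :: "bool option list \<Rightarrow> bool \<Rightarrow> bool list" where
  "fill p c = map (\<lambda>z. case z of None \<Rightarrow> c | Some b \<Rightarrow> b) p"

lemma length_flip[simp]: "length (flip x i) = length x"
  by (simp add: flip_def)
lemma nth_flip: "j < length x \<Longrightarrow> flip x i ! j = (if j = i then \<not> x!j else x!j)"
  by (simp add: flip_def nth_list_update)
lemma flip_flip[simp]: "flip (flip x i) i = x"
  by (cases "i < length x") (simp_all add: flip_def list_update_beyond)
lemma flip_comm: "flip (flip x i) j = flip (flip x j) i"
  by (rule nth_equalityI) (auto simp: nth_flip)
lemma flip_neq: "i < length x \<Longrightarrow> flip x i \<noteq> x"
  by (metis flip_def list_update_id list_update_overwrite nth_list_update_eq)
lemma flip_inj: "i < length x \<Longrightarrow> j < length x \<Longrightarrow> flip x i = flip x j \<Longrightarrow> i = j"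
  by (metis nth_flip)
lemma flip2_eq: "a < length v \<Longrightarrow> m < length v \<Longrightarrow> flip (flip v a) m = v \<longleftrightarrow> a = m"
  by (metis flip_flip flip_inj length_flip)
lemma flip2_neq: "a < length v \<Longrightarrow> m < length v \<Longrightarrow> a' < length v \<Longrightarrow> flip (flip v a) m \<noteq> flip v a'"
proof
  assume *: "a < length v" "m < length v" "a' < length v" "flip (flip v a) m = flip v a'"
  show False
  proof (cases "a = m")
    case True then show False using * flip_neq[of a' v] by auto
  next
    case False
    show False
    proof (cases "a' = a")
      case True
      have "flip (flip v a) m ! m = flip v a' ! m" by (simp only: *(4))
      then show False using *(1-3) False True by (simp add: nth_flip)
    next
      case F2: False
      have "flip (flip v a) m ! a = flip v a' ! a" by (simp only: *(4))
      then show False using *(1-3) False F2 by (simp add: nth_flip)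
    qed
  qed
qed

lemma cube_flip[simp]: "flip x i \<in> cube n \<longleftrightarrow> x \<in> cube n"
  by (simp add: cube_def)

lemma adj_iff: assumes "x \<in> cube n" "y \<in> cube n"
  shows "adj n x y \<longleftrightarrow> (\<exists>i<n. y = flip x i)"
proof
  assume "adj n x y"
  then obtain j where j: "{i. i < n \<and> x!i \<noteq> y!i} = {j}"
    unfolding adj_def by (meson card_1_singletonE)
  then have "j < n" "x!j \<noteq> y!j" by auto
  moreover have "y = flip x j"
  proof (rule nth_equalityI)
    show "length y = length (flip x j)" using assms by (simp add: cube_def)
    fix i assume "i < length y"
    then show "y!i = flip x j ! i" using j assms \<open>x!j \<noteq> y!j\<close>
      by (auto simp: cube_def nth_flip)
  qed
  ultimately show "\<exists>i<n. y = flip x i" by blast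
next
  assume "\<exists>i<n. y = flip x i"
  then obtain j where "j < n" "y = flip x j" by blast
  then have "{i. i < n \<and> x!i \<noteq> y!i} = {j}" using assms by (auto simp: cube_def nth_flip split: if_splits)
  then show "adj n x y" by (simp add: adj_def)
qed

lemma finite_cube: "finite (cube n)"
proof -
  have "cube n = {xs. set xs \<subseteq> UNIV \<and> length xs = n}" by (auto simp: cube_def)
  then show ?thesis using finite_lists_length_eq[of "UNIV :: bool set"] by simp
qed

lemma finite_pats: "finite (pats n k)"
proof -
  have "pats n k \<subseteq> {xs. set xs \<subseteq> UNIV \<and> length xs = n}" by (auto simp: pats_def)
  then show ?thesis using finite_lists_length_eq[of "UNIV :: bool option set"] finite_subset by auto
qed

lemma fill_in: "length p = n \<Longrightarrow> fill p c \<in> subc n p"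
  by (auto simp: fill_def subc_def cube_def)
lemma nth_fill: "i < length p \<Longrightarrow> fill p c ! i = (case p!i of None \<Rightarrow> c | Some b \<Rightarrow> b)"
  by (simp add: fill_def)

lemma flip_in_subc: assumes "x \<in> subc n p" "m < n"
  shows "flip x m \<in> subc n p \<longleftrightarrow> p!m = None"
proof
  assume "flip x m \<in> subc n p"
  then have h1: "\<forall>i<n. \<forall>b. p!i = Some b \<longrightarrow> flip x m ! i = b" and h2: "\<forall>i<n. \<forall>b. p!i = Some b \<longrightarrow> x ! i = b"
    and h3: "length x = n"
    using assms by (auto simp: subc_def cube_def)
  show "p!m = None"
  proof (cases "p!m")
    case (Some a)
    then have "flip x m ! m = a" "x!m = a" using h1 h2 assms(2) by auto
    then show ?thesis using h3 assms(2) by (simp add: nth_flip)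
  qed simp
next
  assume "p!m = None"
  then show "flip x m \<in> subc n p" using assms by (auto simp: subc_def cube_def nth_flip)
qed

lemma subc_upd: assumes "i < n" "length q = n" "q!i = None"
  shows "x \<in> subc n (q[i := Some c]) \<longleftrightarrow> x \<in> subc n q \<and> x!i = c"
  using assms by (auto simp: subc_def nth_list_update)

lemma freep_upd_Some: "freep (q[i := Some c]) = freep q - {i}"
  by (cases "i < length q") (auto simp: freep_def nth_list_update)
lemma freep_upd_None: "i < length q \<Longrightarrow> freep (q[i := None]) = insert i (freep q)"
  by (auto simp: freep_def nth_list_update)
lemma finite_freep[simp]: "finite (freep p)"
  by (simp add: freep_def)

lemma is_3subcube_iff: "is_3subcube n C \<longleftrightarrow> (\<exists>p\<in>pats n 3. C = subc n p)"
proof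
  assume "is_3subcube n C"
  then obtain I base where I: "I \<subseteq> {..<n}" "card I = 3" "base \<in> cube n"
    and C: "C = {x \<in> cube n. \<forall>i<n. i \<notin> I \<longrightarrow> x ! i = base ! i}"
    unfolding is_3subcube_def by blast
  define p where "p = map (\<lambda>i. if i \<in> I then None else Some (base!i)) [0..<n]"
  have lp: "length p = n" by (simp add: p_def)
  have fp: "freep p = I" using I(1) by (auto simp: freep_def p_def split: if_splits)
  have "C = subc n p" unfolding C subc_def p_def by auto
  then show "\<exists>p\<in>pats n 3. C = subc n p" using lp fp I(2) by (auto simp: pats_def)
next
  assume "\<exists>p\<in>pats n 3. C = subc n p"
  then obtain p where p: "length p = n" "card (freep p) = 3" "C = subc n p" by (auto simp: pats_def)
  have "freep p \<subseteq> {..<n}" using p by (auto simp: freep_def)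
  moreover have "fill p False \<in> cube n" using p by (simp add: fill_def cube_def)
  moreover have "C = {x \<in> cube n. \<forall>i<n. i \<notin> freep p \<longrightarrow> x ! i = fill p False ! i}"
    unfolding p(3) subc_def using p(1) by (auto simp: freep_def nth_fill split: option.splits)
  ultimately show "is_3subcube n C" unfolding is_3subcube_def using p(2) by blast
qed

lemma subc_inj: assumes "length p = n" "length q = n" "subc n p = subc n q" shows "p = q"
proof (rule nth_equalityI)
  show "length p = length q" using assms by simp
  fix i assume i: "i < length p"
  have A: "\<And>p q b. length p = n \<Longrightarrow> length q = n \<Longrightarrow> subc n p = subc n q \<Longrightarrow> i < n \<Longrightarrow> p!i = Some b \<Longrightarrow> q!i = Some b"
  proof -
    fix p q b assume h: "length p = n" "length q = n" "subc n p = subc n q" "i < n" "p!i = Some b"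
    show "q!i = Some b"
    proof (cases "q!i")
      case None
      have "fill q (\<not> b) \<in> subc n p" using fill_in[OF h(2)] h(3) by simp
      then have "fill q (\<not> b) ! i = b" using h by (auto simp: subc_def)
      then show ?thesis using None h by (simp add: nth_fill)
    next
      case (Some b')
      have "fill p False \<in> subc n q" using fill_in[OF h(1)] h(3) by simp
      then have "fill p False ! i = b'" using h Some by (auto simp: subc_def)
      then show ?thesis using Some h by (simp add: nth_fill)
    qed
  qed
  show "p!i = q!i"
  proof (cases "p!i")
    case None
    then show ?thesis using A[of q p] assms i by (cases "q!i") auto
  next
    case (Some b)
    then show ?thesis using A[of p q b] assms i by auto
  qed
qed

lemma W12_eq: "W12 = insert [False,False,False] {[True,False,False],[False,True,False],[False,False,True]}"
  by (auto simp: W12_def)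

lemma copy_imp_star: assumes p: "p \<in> pats n 3" and g: "gives_copy n W12 S (subc n p)"
  shows "star n p S"
proof -
  let ?C = "subc n p"
  from g obtain f where iso: "cube_iso n ?C f" and fW: "f ` W12 = S \<inter> ?C" by (auto simp: gives_copy_def)
  have bij: "bij_betw f (cube 3) ?C" and ad: "\<And>x y. x \<in> cube 3 \<Longrightarrow> y \<in> cube 3 \<Longrightarrow> adj 3 x y \<longleftrightarrow> adj n (f x) (f y)"
    using iso by (auto simp: cube_iso_def)
  have lp: "length p = n" and c3: "card (freep p) = 3" using p by (auto simp: pats_def)
  define o0 where "o0 = [False,False,False]"
  define E where "E = {[True,False,False],[False,True,False],[False,False,True]}"
  have o0c: "o0 \<in> cube 3" by (simp add: o0_def cube_def)
  have Ec: "E \<subseteq> cube 3" by (auto simp: E_def cube_def)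
  have Eflip: "\<And>e. e \<in> E \<Longrightarrow> \<exists>k<3. e = flip o0 k"
  proof -
    fix e assume "e \<in> E"
    then have "e = flip o0 0 \<or> e = flip o0 1 \<or> e = flip o0 2" by (auto simp: E_def o0_def flip_def)
    then show "\<exists>k<3. e = flip o0 k" by (metis zero_less_numeral one_less_numeral_iff semiring_norm(77) lessI numeral_2_eq_2 numeral_3_eq_3)
  qed
  define v where "v = f o0"
  have vC: "v \<in> ?C" using bij o0c by (auto simp: v_def bij_betw_def)
  have sub: "f ` E \<subseteq> flip v ` freep p"
  proof
    fix u assume "u \<in> f ` E"
    then obtain e where e: "e \<in> E" "u = f e" by blast
    have ec: "e \<in> cube 3" using e Ec by auto
    have "adj 3 o0 e" using adj_iff[OF o0c ec] Eflip[OF e(1)] by blast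
    then have "adj n v u" using ad[OF o0c ec] e by (simp add: v_def)
    moreover have uC: "u \<in> ?C" using bij ec e by (auto simp: bij_betw_def)
    ultimately obtain i where i: "i < n" "u = flip v i" using adj_iff vC by (auto simp: subc_def)
    then have "p!i = None" using flip_in_subc[OF vC i(1)] uC by simp
    then show "u \<in> flip v ` freep p" using i lp by (auto simp: freep_def)
  qed
  have injf: "inj_on f (cube 3)" using bij by (auto simp: bij_betw_def)
  have "card (f ` E) = card E" using inj_on_subset[OF injf Ec] by (simp add: card_image)
  also have "card E = 3" by (simp add: E_def)
  finally have cE: "card (f ` E) = 3" .
  have "card (flip v ` freep p) \<le> 3" using card_image_le[of "freep p" "flip v"] c3 by simp
  then have eq: "f ` E = flip v ` freep p"
    using card_subset_eq[OF _ sub] cE by (metis card_image_le card_mono finite_freep finite_imageI le_antisym sub)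
  have "S \<inter> ?C = insert v (f ` E)" using fW by (simp add: W12_eq v_def o0_def E_def)
  then show ?thesis unfolding star_def using vC eq by auto
qed

lemma bool_xx: "((p::bool) = (p = q)) = q" by blast

lemma len3: "length x = 3 \<Longrightarrow> \<exists>a b c. x = [a,b,c]"
  by (cases x; cases "tl x"; cases "tl (tl x)") auto

lemma star_imp_copy: assumes p: "p \<in> pats n 3" and st: "star n p S"
  shows "gives_copy n W12 S (subc n p)"
proof -
  let ?C = "subc n p"
  have lp: "length p = n" and c3: "card (freep p) = 3" using p by (auto simp: pats_def)
  from st obtain v where vC: "v \<in> ?C" and SC: "S \<inter> ?C = insert v (flip v ` freep p)"
    by (auto simp: star_def)
  from c3 obtain a b c where F: "freep p = {a,b,c}" and d: "a \<noteq> b" "b \<noteq> c" "a \<noteq> c"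
    by (auto simp: card_3_iff)
  have "a \<in> freep p" "b \<in> freep p" "c \<in> freep p" using F by auto
  then have abc: "a < n" "b < n" "c < n" "p!a = None" "p!b = None" "p!c = None"
    unfolding freep_def using lp by auto
  have lv: "length v = n" using vC by (auto simp: subc_def cube_def)
  have fixv: "\<And>i. i < n \<Longrightarrow> i \<noteq> a \<Longrightarrow> i \<noteq> b \<Longrightarrow> i \<noteq> c \<Longrightarrow> \<forall>u\<in>?C. u!i = v!i"
  proof -
    fix i assume i: "i < n" "i \<noteq> a" "i \<noteq> b" "i \<noteq> c"
    then have "p!i \<noteq> None" using F lp by (auto simp: freep_def)
    then obtain bb where "p!i = Some bb" by auto
    then show "\<forall>u\<in>?C. u!i = v!i" using vC i by (auto simp: subc_def)
  qed
  define f where "f x = map (\<lambda>i. if i = a then v!i \<noteq> x!0 else if i = b then v!i \<noteq> x!1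
      else if i = c then v!i \<noteq> x!2 else v!i) [0..<n]" for x
  have lf: "length (f x) = n" for x by (simp add: f_def)
  have nf: "i < n \<Longrightarrow> f x ! i = (if i = a then v!i \<noteq> x!0 else if i = b then v!i \<noteq> x!1
      else if i = c then v!i \<noteq> x!2 else v!i)" for x i by (simp add: f_def)
  have fC: "f x \<in> ?C" for x
  proof -
    have "\<forall>i<n. \<forall>bb. p!i = Some bb \<longrightarrow> f x ! i = bb"
    proof (intro allI impI)
      fix i bb assume i: "i < n" "p!i = Some bb"
      then have "i \<noteq> a" "i \<noteq> b" "i \<noteq> c" using abc by auto
      then have "f x ! i = v!i" using nf[OF i(1)] by simp
      moreover have "v!i = bb" using vC i by (auto simp: subc_def)
      ultimately show "f x ! i = bb" by simp
    qed
    then show ?thesis using lf by (auto simp: subc_def cube_def)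
  qed
  have c3l: "x \<in> cube 3 \<Longrightarrow> \<exists>a b c. x = [a, b, c]" for x
    using len3 by (auto simp: cube_def)
  have injf: "inj_on f (cube 3)"
  proof
    fix x y assume xy: "x \<in> cube 3" "y \<in> cube 3" "f x = f y"
    have fa: "f z ! a = (v!a \<noteq> z!0)" "f z ! b = (v!b \<noteq> z!1)" "f z ! c = (v!c \<noteq> z!2)" for z
      using nf[OF abc(1), of z] nf[OF abc(2), of z] nf[OF abc(3), of z] d by simp_all
    have "f x ! a = f y ! a" "f x ! b = f y ! b" "f x ! c = f y ! c" by (simp_all only: xy(3))
    then have e: "x!0 = y!0" "x!1 = y!1" "x!2 = y!2" unfolding fa by argo+
    obtain x0 x1 x2 where "x = [x0,x1,x2]" using c3l[OF xy(1)] by blast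
    moreover obtain y0 y1 y2 where "y = [y0,y1,y2]" using c3l[OF xy(2)] by blast
    ultimately show "x = y" using e by simp
  qed
  have surj: "f ` cube 3 = ?C"
  proof
    show "f ` cube 3 \<subseteq> ?C" using fC by auto
    show "?C \<subseteq> f ` cube 3"
    proof
      fix u assume uC: "u \<in> ?C"
      define x where "x = [v!a \<noteq> u!a, v!b \<noteq> u!b, v!c \<noteq> u!c]"
      have "f x = u"
      proof (rule nth_equalityI)
        show "length (f x) = length u" using uC lf by (auto simp: subc_def cube_def)
        fix i assume "i < length (f x)"
        then have i: "i < n" using lf by simp
        consider "i = a" | "i = b" | "i = c" | "i \<noteq> a" "i \<noteq> b" "i \<noteq> c" by blast
        then show "f x ! i = u ! i"
        proof cases
          case 4 then show ?thesis using fixv[OF i 4] uC nf[OF i, of x] by simp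
        qed (use nf[OF i, of x] d in \<open>simp_all add: x_def bool_xx\<close>)
      qed
      moreover have "x \<in> cube 3" by (simp add: x_def cube_def)
      ultimately show "u \<in> f ` cube 3" by blast
    qed
  qed
  have fflip: "f (flip x k) = flip (f x) ([a,b,c]!k)" if "x \<in> cube 3" "k < 3" for x k
  proof (rule nth_equalityI)
    show "length (f (flip x k)) = length (flip (f x) ([a,b,c]!k))" by (simp add: lf)
    fix i assume "i < length (f (flip x k))"
    then have i: "i < n" using lf by simp
    have k: "k = 0 \<or> k = 1 \<or> k = 2" using that by auto
    have x3: "length x = 3" using that by (simp add: cube_def)
    show "f (flip x k) ! i = flip (f x) ([a,b,c]!k) ! i"
    proof -
      have fl: "i' < n \<Longrightarrow> flip (f x) j ! i' = (if i' = j then \<not> f x ! i' else f x ! i')" for i' j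
        using nth_flip[of i' "f x" j] lf by simp
      have fl2: "flip x k' ! j = (if j = k' then \<not> x ! j else x ! j)" if "j < 3" for j k'
        using nth_flip[of j x k'] x3 that by simp
      have d': "b \<noteq> a" "c \<noteq> b" "c \<noteq> a" using d by auto
      consider "i = a" | "i = b" | "i = c" | "i \<noteq> a" "i \<noteq> b" "i \<noteq> c" by blast
      then show ?thesis
        using k i by cases (elim disjE; simp add: fl nf fl2 d d' abc)+
    qed
  qed
  have fcube: "f z \<in> cube n" for z by (simp add: cube_def lf)
  have adjf: "adj 3 x y \<longleftrightarrow> adj n (f x) (f y)" if xy: "x \<in> cube 3" "y \<in> cube 3" for x y
  proof
    assume "adj 3 x y"
    then obtain k where k: "k < 3" "y = flip x k" using adj_iff[OF xy] by blast
    have "k = 0 \<or> k = 1 \<or> k = 2" using k by auto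
    then have kn: "[a,b,c]!k < n" using abc by (elim disjE) simp_all
    have "f y = flip (f x) ([a,b,c]!k)" using fflip[OF xy(1) k(1)] k(2) by simp
    then show "adj n (f x) (f y)" using adj_iff[OF fcube fcube] kn by blast
  next
    assume "adj n (f x) (f y)"
    then obtain i where i: "i < n" "f y = flip (f x) i" using adj_iff[OF fcube fcube] by blast
    have "flip (f x) i \<in> ?C" using fC[of y] i(2) by simp
    then have "p!i = None" using flip_in_subc[OF fC i(1)] by simp
    then have "i \<in> freep p" using lp i by (simp add: freep_def)
    then have "i = [a,b,c]!0 \<or> i = [a,b,c]!1 \<or> i = [a,b,c]!2" using F by simp
    then obtain k where k: "k < 3" "i = [a,b,c]!k"
      by (metis zero_less_numeral one_less_numeral_iff semiring_norm(77) lessI numeral_2_eq_2 numeral_3_eq_3)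
    have "f y = f (flip x k)" using i k fflip[OF xy(1) k(1)] by simp
    moreover have "flip x k \<in> cube 3" using xy by simp
    ultimately have "y = flip x k" using injf xy by (meson inj_onD)
    then show "adj 3 x y" using adj_iff[OF xy] k by blast
  qed
  have iso: "cube_iso n ?C f" unfolding cube_iso_def bij_betw_def using injf surj adjf by blast
  have flv: "i < n \<Longrightarrow> flip v j ! i = (if i = j then \<not> v ! i else v ! i)" for i j
    using nth_flip[of i v j] lv by simp
  have o: "f [False,False,False] = v"
    by (rule nth_equalityI) (simp_all add: lf lv nf)
  have e1: "f [True,False,False] = flip v a" "f [False,True,False] = flip v b" "f [False,False,True] = flip v c"
    by (rule nth_equalityI; simp add: lf lv nf flv; use d in blast)+
  have "f ` W12 = insert v (flip v ` freep p)"
    using o e1 F by (simp add: W12_def insert_commute)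
  then show ?thesis using iso SC by (auto simp: gives_copy_def)
qed

lemma Lambda_set_eq: "Lambda_set n W12 S = card {p \<in> pats n 3. star n p S}"
proof -
  have "{C. is_3subcube n C \<and> gives_copy n W12 S C} = subc n ` {p \<in> pats n 3. star n p S}"
    using copy_imp_star star_imp_copy by (auto simp: is_3subcube_iff)
  moreover have "inj_on (subc n) {p \<in> pats n 3. star n p S}"
    by (rule inj_onI) (auto simp: pats_def intro: subc_inj)
  ultimately show ?thesis unfolding Lambda_set_def by (simp add: card_image)
qed

lemma card_freep_Cons: "card (freep (z # p)) = (if z = None then Suc (card (freep p)) else card (freep p))"
proof -
  have "freep (z # p) = (if z = None then insert 0 (Suc ` freep p) else Suc ` freep p)"
  proof -
    have m: "i \<in> freep (z' # p) \<longleftrightarrow> (i = 0 \<and> z' = None) \<or> (\<exists>j. i = Suc j \<and> j \<in> freep p)" for i z'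
      by (cases i) (auto simp: freep_def)
    show ?thesis by (auto simp: m)
  qed
  then show ?thesis by (simp add: card_image card_insert_if)
qed

lemma pats_0: "pats 0 k = (if k = 0 then {[]} else {})"
  by (auto simp: pats_def freep_def)

lemma pats_Suc: "pats (Suc n) k = (if k = 0 then {} else Cons None ` pats n (k - 1))
   \<union> Cons (Some True) ` pats n k \<union> Cons (Some False) ` pats n k"
proof -
  have "p \<in> pats (Suc n) k \<longleftrightarrow> p \<in> (if k = 0 then {} else Cons None ` pats n (k - 1))
   \<union> Cons (Some True) ` pats n k \<union> Cons (Some False) ` pats n k" for p
  proof (cases p)
    case Nil then show ?thesis by (auto simp: pats_def)
  next
    case (Cons z q)
    then show ?thesis by (cases z) (auto simp: pats_def card_freep_Cons)
  qed
  then show ?thesis by blast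
qed

lemma card_pats: "card (pats n k) = (n choose k) * 2 ^ (n - k)"
proof (induction n arbitrary: k)
  case 0 then show ?case by (simp add: pats_0)
next
  case (Suc n)
  have fin: "finite (pats n j)" for j by (rule finite_pats)
  have c2: "card (Cons (Some True) ` pats n k \<union> Cons (Some False) ` pats n k) = 2 * card (pats n k)"
    by (subst card_Un_disjoint) (auto simp: fin card_image)
  show ?case
  proof (cases k)
    case 0
    then show ?thesis using c2 Suc.IH[of 0] by (simp add: pats_Suc)
  next
    case (Suc k')
    have "card (pats (Suc n) k) = card (Cons None ` pats n k') + card (Cons (Some True) ` pats n k \<union> Cons (Some False) ` pats n k)"
      unfolding pats_Suc using Suc by (subst Un_assoc, subst card_Un_disjoint) (auto simp: fin)
    also have "\<dots> = (n choose k') * 2 ^ (n - k') + 2 * ((n choose k) * 2 ^ (n - k))"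
      using c2 Suc.IH by (simp add: card_image)
    also have "\<dots> = (Suc n choose k) * 2 ^ (Suc n - k)"
    proof (cases "k' < n")
      case True
      then have "2 * 2 ^ (n - k) = (2::nat) ^ (n - k')" using Suc by (simp add: Suc_diff_Suc power_Suc[symmetric])
      then show ?thesis using Suc by (simp add: algebra_simps)
    next
      case False
      then show ?thesis using Suc by simp
    qed
    finally show ?thesis .
  qed
qed

lemma subc_len: "x \<in> subc n p \<Longrightarrow> length x = n"
  by (simp add: subc_def cube_def)

lemma core:
  assumes q: "length q = n" "card (freep q) = 4" and i: "i \<in> freep q" and k: "k \<in> freep q" "k \<noteq> i"
    and sv: "S \<inter> subc n (q[i:=Some c]) = insert v (flip v ` (freep q - {i}))" "v \<in> subc n (q[i:=Some c])"
    and sv': "S \<inter> subc n (q[i:=Some (\<not>c)]) = insert v' (flip v' ` (freep q - {i}))" "v' \<in> subc n (q[i:=Some (\<not>c)])"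
    and sw: "S \<inter> subc n (q[k:=Some b]) = insert w (flip w ` (freep q - {k}))" "w \<in> subc n (q[k:=Some b])"
    and wi: "w!i = c"
  shows "v' = flip (flip v i) k"
proof -
  let ?F = "freep q"
  have Fn: "j \<in> ?F \<Longrightarrow> j < n \<and> q!j = None" for j using q(1) by (auto simp: freep_def)
  have mem: "j \<in> ?F \<Longrightarrow> x \<in> subc n (q[j:=Some d]) \<longleftrightarrow> x \<in> subc n q \<and> x!j = d" for j d x
    using subc_upd[of j n q] Fn q(1) by blast
  have fl: "x \<in> subc n q \<Longrightarrow> j \<in> ?F \<Longrightarrow> flip x j \<in> subc n q" for x j
    using flip_in_subc Fn by blast
  have card2: "card (?F - {i,k}) = 2" using q(2) i k by (simp add: card_Diff_subset)
  then obtain m1 m2 where M: "?F - {i,k} = {m1,m2}" "m1 \<noteq> m2" by (auto simp: card_2_iff)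
  have m12: "m1 \<in> ?F" "m2 \<in> ?F" "m1 \<noteq> i" "m2 \<noteq> i" "m1 \<noteq> k" "m2 \<noteq> k" using M by blast+
  have lv: "length v = n" "length v' = n" "length w = n" using sv(2) sv'(2) sw(2) subc_len by blast+
  have in_n: "j \<in> ?F \<Longrightarrow> j < n" for j using Fn by blast
  have wq: "w \<in> subc n q" "w!k = b" using mem[OF k(1)] sw(2) by auto
  have vq: "v \<in> subc n q" "v!i = c" using mem[OF i] sv(2) by auto
  have v'q: "v' \<in> subc n q" "v'!i = (\<not>c)" using mem[OF i] sv'(2) by auto
  have SD: "x \<in> S \<and> x \<in> subc n q \<and> x!k = b \<longleftrightarrow> x \<in> insert w (flip w ` (?F - {k}))" for x
    by (simp only: sw(1)[symmetric] Int_iff mem[OF k(1)])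
  have SC: "x \<in> S \<and> x \<in> subc n q \<and> x!i = c \<longleftrightarrow> x \<in> insert v (flip v ` (?F - {i}))" for x
    by (simp only: sv(1)[symmetric] Int_iff mem[OF i])
  have SC': "x \<in> S \<and> x \<in> subc n q \<and> x!i = (\<not>c) \<longleftrightarrow> x \<in> insert v' (flip v' ` (?F - {i}))" for x
    by (simp only: sv'(1)[symmetric] Int_iff mem[OF i])
  have wS: "w \<in> S" using SD by blast
  have fwS: "flip w m \<in> S" if "m \<in> {m1,m2}" for m using SD[of "flip w m"] that m12 by blast
  have fwC: "flip w m \<in> insert v (flip v ` (?F - {i}))" if "m \<in> {m1,m2}" for m
  proof -
    have "flip w m \<in> subc n q" using fl[OF wq(1)] that m12 by blast
    moreover have "flip w m ! i = c" using wi that m12 lv in_n[OF i] by (auto simp: nth_flip)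
    ultimately show ?thesis using SC fwS[OF that] by blast
  qed
  have wv: "w = v"
  proof (rule ccontr)
    assume "w \<noteq> v"
    then obtain a where a: "a \<in> ?F - {i}" "w = flip v a" using SC wS wq wi by blast
    have "a = m" if "m \<in> {m1,m2}" for m
    proof -
      have "flip (flip v a) m \<in> insert v (flip v ` (?F - {i}))" using fwC[OF that] a by simp
      then show ?thesis using flip2_eq flip2_neq lv in_n a m12 that by fastforce
    qed
    then show False using M(2) by auto
  qed
  have vk: "v!k = b" using wq wv by simp
  have fviS: "flip v i \<in> S" using SD[of "flip v i"] i k wv by blast
  have "flip v i ! i = (\<not> c)" using lv(1) in_n[OF i] vq(2) by (simp add: nth_flip)
  then have "flip v i \<in> insert v' (flip v' ` (?F - {i}))"
    using SC'[of "flip v i"] fviS fl[OF vq(1) i] by blast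
  then consider "flip v i = v'" | m where "m \<in> ?F - {i}" "flip v i = flip v' m" by blast
  then show ?thesis
  proof cases
    case 1
    have "flip v' m1 \<in> S" using SC'[of "flip v' m1"] m12 by blast
    moreover have "flip v' m1 \<in> subc n q" using fl[OF v'q(1)] m12 by blast
    moreover have "flip v' m1 ! k = b" using 1 vk m12 k lv in_n[OF k(1)] by (auto simp: nth_flip)
    ultimately have "flip (flip v i) m1 \<in> insert v (flip v ` (?F - {k}))" using SD wv 1 by blast
    then show ?thesis using flip2_eq flip2_neq lv in_n i m12 by fastforce
  next
    case (2 m)
    have v'eq: "v' = flip (flip v i) m" using 2(2) by (metis flip_flip)
    show ?thesis
    proof (cases "m = k")
      case True then show ?thesis using v'eq by simp
    next
      case False
      then have "m \<in> {m1,m2}" using 2(1) M by blast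
      then obtain m' where m': "m' \<in> {m1,m2}" "m' \<noteq> m" using M(2) by blast
      have "flip v' m' \<in> S" using SC'[of "flip v' m'"] m' m12 by blast
      moreover have "flip v' m' \<in> subc n q" using fl[OF v'q(1)] m' m12 by blast
      moreover have "flip v' m' ! k = b" using v'eq vk m' m12 k False lv in_n[OF k(1)] by (auto simp: nth_flip)
      ultimately have "flip v' m' \<in> insert v (flip v ` (?F - {k}))" using SD wv by blast
      then consider "flip v' m' = v" | a' where "flip v' m' = flip v a'" by blast
      then show ?thesis
      proof cases
        case 1
        have "flip v' m' ! i = v ! i" using 1 by simp
        then show ?thesis using v'eq m' m12 2(1) lv in_n[OF i] by (auto simp: nth_flip)
      next
        case (2 a')
        show ?thesis
        proof (cases "a' = i")
          case True
          have "flip v' m' ! m = flip v a' ! m" using 2 by simp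
          then show ?thesis using True v'eq m' m12 \<open>m \<in> {m1,m2}\<close> lv in_n[OF i] in_n m12 by (auto simp: nth_flip)
        next
          case False
          have "flip v' m' ! i = flip v a' ! i" using 2 by simp
          then show ?thesis using False v'eq m' m12 \<open>m \<in> {m1,m2}\<close> lv in_n[OF i] by (auto simp: nth_flip)
        qed
      qed
    qed
  qed
qed



lemma star_upd: assumes "star n (q[j := Some d]) S"
  obtains v where "v \<in> subc n (q[j := Some d])" "S \<inter> subc n (q[j := Some d]) = insert v (flip v ` (freep q - {j}))"
  using assms by (auto simp: star_def freep_upd_Some)

lemma four:
  assumes q: "q \<in> pats n 4"
  shows "card {(j, d). j \<in> freep q \<and> star n (q[j := Some d]) S} \<le> 4"
proof -
  let ?T = "{(j, d). j \<in> freep q \<and> star n (q[j := Some d]) S}"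
  have lq: "length q = n" and c4: "card (freep q) = 4" using q by (auto simp: pats_def)
  have finT: "finite ?T"
    by (rule finite_subset[of _ "freep q \<times> UNIV"]) auto
  show ?thesis
  proof (cases "inj_on fst ?T")
    case True
    have "card ?T \<le> card (freep q)" by (rule card_inj_on_le[OF True]) auto
    then show ?thesis using c4 by simp
  next
    case False
    then obtain j d d' where jd: "(j, d) \<in> ?T" "(j, d') \<in> ?T" "d \<noteq> d'"
      unfolding inj_on_def by auto
    then have j: "j \<in> freep q" by simp
    have st1: "star n (q[j := Some d]) S" and st2: "star n (q[j := Some (\<not> d)]) S"
    proof -
      show "star n (q[j := Some d]) S" using jd(1) by simp
      have "d' = (\<not> d)" using jd(3) by blast
      then show "star n (q[j := Some (\<not> d)]) S" using jd(2) by simp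
    qed
    obtain v where v: "v \<in> subc n (q[j := Some d])" "S \<inter> subc n (q[j := Some d]) = insert v (flip v ` (freep q - {j}))"
      using star_upd[OF st1] by blast
    obtain v' where v': "v' \<in> subc n (q[j := Some (\<not> d)])" "S \<inter> subc n (q[j := Some (\<not> d)]) = insert v' (flip v' ` (freep q - {j}))"
      using star_upd[OF st2] by blast
    let ?K = "{k. k \<in> freep q \<and> k \<noteq> j \<and> v' = flip (flip v j) k}"
    have Tsub: "?T \<subseteq> insert j ?K \<times> UNIV"
    proof
      fix x assume "x \<in> ?T"
      then obtain k b where x: "x = (k, b)" "k \<in> freep q" "star n (q[k := Some b]) S" by auto
      show "x \<in> insert j ?K \<times> UNIV"
      proof (cases "k = j")
        case True then show ?thesis using x by simp
      next
        case False
        obtain w where w: "w \<in> subc n (q[k := Some b])" "S \<inter> subc n (q[k := Some b]) = insert w (flip w ` (freep q - {k}))"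
          using star_upd[OF x(3)] by blast
        have "v' = flip (flip v j) k"
        proof (cases "w ! j = d")
          case True
          show ?thesis by (rule core[OF lq c4 j x(2) False v(2) v(1) v'(2) v'(1) w(2) w(1) True])
        next
          case F: False
          have v'': "v \<in> subc n (q[j := Some (\<not> \<not> d)])" "S \<inter> subc n (q[j := Some (\<not> \<not> d)]) = insert v (flip v ` (freep q - {j}))"
            using v by simp_all
          have "v = flip (flip v' j) k"
            by (rule core[OF lq c4 j x(2) False v'(2) v'(1) v''(2) v''(1) w(2) w(1)]) (use F in simp)
          then show ?thesis by (metis flip_flip flip_comm)
        qed
        then show ?thesis using x False by simp
      qed
    qed
    have lv: "length v = n" using v(1) subc_len by blast
    have finK: "finite ?K" by (rule finite_subset[of _ "freep q"]) auto
    have "card ?K \<le> Suc 0"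
      unfolding card_le_Suc0_iff_eq[OF finK]
    proof (intro ballI)
      fix k1 k2 assume "k1 \<in> ?K" "k2 \<in> ?K"
      then have "flip (flip v j) k1 = flip (flip v j) k2" "k1 < n" "k2 < n"
        using lq by (auto simp: freep_def)
      then show "k1 = k2" using flip_inj[of k1 "flip v j" k2] lv by simp
    qed
    then have "card (insert j ?K) \<le> 2" using finK by (simp add: card_insert_if)
    then have "card (insert j ?K \<times> (UNIV :: bool set)) \<le> 4" by (simp add: card_cartesian_product)
    moreover have "card ?T \<le> card (insert j ?K \<times> (UNIV :: bool set))"
      by (rule card_mono[OF _ Tsub]) (simp add: finK)
    ultimately show ?thesis by linarith
  qed
qed

definition rel :: "bool option list \<Rightarrow> bool option list \<Rightarrow> bool" where
  "rel p q \<longleftrightarrow> (\<exists>j\<in>freep q. \<exists>d. p = q[j := Some d])"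

lemma card_filter_sum: "finite A \<Longrightarrow> card {x\<in>A. P x} = (\<Sum>x\<in>A. if P x then 1 else 0 :: nat)"
  by (induction A rule: finite_induct) (auto simp: insert_compr[symmetric] Collect_conj_eq Int_insert_left)

lemma up_count: assumes p: "p \<in> pats n 3"
  shows "n - 3 \<le> card {q \<in> pats n 4. rel p q}"
proof -
  have lp: "length p = n" and c3: "card (freep p) = 3" using p by (auto simp: pats_def)
  let ?A = "{..<n} - freep p"
  have cA: "card ?A = n - 3" using c3 lp by (subst card_Diff_subset) (auto simp: freep_def)
  have inj: "inj_on (\<lambda>i. p[i := None]) ?A"
  proof (rule inj_onI)
    fix i i' assume h: "i \<in> ?A" "i' \<in> ?A" "p[i := None] = p[i' := None]"
    show "i = i'"
    proof (rule ccontr)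
      assume "i \<noteq> i'"
      then have "p[i' := None] ! i = p ! i" by simp
      moreover have "p[i := None] ! i = None" using h(1) lp by simp
      ultimately show False using h lp by (auto simp: freep_def)
    qed
  qed
  have sub: "(\<lambda>i. p[i := None]) ` ?A \<subseteq> {q \<in> pats n 4. rel p q}"
  proof
    fix q assume "q \<in> (\<lambda>i. p[i := None]) ` ?A"
    then obtain i where i: "i < n" "i \<notin> freep p" "q = p[i := None]" by auto
    then obtain d where d: "p!i = Some d" using lp by (auto simp: freep_def)
    have fq: "freep q = insert i (freep p)" using i lp freep_upd_None by simp
    then have "card (freep q) = 4" using i(2) c3 by simp
    moreover have "rel p q" unfolding rel_def
    proof (intro bexI exI)
      show "p = q[i := Some d]" using d i(3) by (metis list_update_id list_update_overwrite)
      show "i \<in> freep q" using fq by simp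
    qed
    ultimately show "q \<in> {q \<in> pats n 4. rel p q}" using i lp by (simp add: pats_def)
  qed
  have "card ((\<lambda>i. p[i := None]) ` ?A) \<le> card {q \<in> pats n 4. rel p q}"
    by (rule card_mono[OF _ sub]) (simp add: finite_pats)
  then show ?thesis using cA card_image[OF inj] by simp
qed

lemma down_count: assumes q: "q \<in> pats n 4"
  shows "card {p \<in> pats n 3. star n p S \<and> rel p q} \<le> 4"
proof -
  let ?T = "{(j, d). j \<in> freep q \<and> star n (q[j := Some d]) S}"
  have "{p \<in> pats n 3. star n p S \<and> rel p q} \<subseteq> (\<lambda>(j, d). q[j := Some d]) ` ?T"
    unfolding rel_def by auto
  moreover have "finite ?T" by (rule finite_subset[of _ "freep q \<times> UNIV"]) auto
  ultimately have "card {p \<in> pats n 3. star n p S \<and> rel p q} \<le> card ?T"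
    by (meson card_image_le card_mono finite_imageI le_trans)
  then show ?thesis using four[OF q, of S] by linarith
qed

lemma upper: assumes n: "n \<ge> 4"
  shows "2 * card {p \<in> pats n 3. star n p S} \<le> card (pats n 3)"
proof -
  let ?Q = "{p \<in> pats n 3. star n p S}"
  have finQ: "finite ?Q" using finite_pats by simp
  have "(n - 3) * card ?Q = (\<Sum>p\<in>?Q. n - 3)" by simp
  also have "\<dots> \<le> (\<Sum>p\<in>?Q. card {q \<in> pats n 4. rel p q})"
    by (rule sum_mono) (use up_count in auto)
  also have "\<dots> = (\<Sum>p\<in>?Q. \<Sum>q\<in>pats n 4. if rel p q then 1 else 0)"
    by (simp add: card_filter_sum finite_pats)
  also have "\<dots> = (\<Sum>q\<in>pats n 4. \<Sum>p\<in>?Q. if rel p q then 1 else 0)"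
    by (rule sum.swap)
  also have "\<dots> = (\<Sum>q\<in>pats n 4. card {p \<in> ?Q. rel p q})"
    by (intro sum.cong refl) (rule card_filter_sum[OF finQ, symmetric])
  also have "\<dots> \<le> (\<Sum>q\<in>pats n 4. 4)"
  proof (rule sum_mono)
    fix q assume "q \<in> pats n 4"
    have "{p \<in> ?Q. rel p q} = {p \<in> pats n 3. star n p S \<and> rel p q}" by auto
    then show "card {p \<in> ?Q. rel p q} \<le> 4" using down_count[OF \<open>q \<in> pats n 4\<close>] by simp
  qed
  also have "\<dots> = 4 * card (pats n 4)" by simp
  also have "\<dots> = 4 * (n choose 4) * 2 ^ (n - 4)" by (simp add: card_pats)
  also have "4 * (n choose 4) = (n - 3) * (n choose 3)"
    using binomial_absorption[of 3 n] binomial_absorb_comp[of n 3] by simp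
  finally have "(n - 3) * card ?Q \<le> (n - 3) * ((n choose 3) * 2 ^ (n - 4))" by (simp add: mult.assoc)
  then have "card ?Q \<le> (n choose 3) * 2 ^ (n - 4)" using n by simp
  then have "2 * card ?Q \<le> (n choose 3) * (2 * 2 ^ (n - 4))" by simp
  also have "2 * 2 ^ (n - 4) = (2::nat) ^ (n - 3)"
  proof -
    have "n - 3 = Suc (n - 4)" using n by simp
    then show ?thesis by simp
  qed
  finally show ?thesis by (simp add: card_pats)
qed



definition wt :: "bool list \<Rightarrow> nat" where "wt x = card {i. i < length x \<and> x!i}"
definition beta :: "bool option list \<Rightarrow> nat" where "beta p = card {i. i < length p \<and> p!i = Some True}"
definition S0 :: "nat \<Rightarrow> bool list set" where "S0 n = {x \<in> cube n. wt x mod 4 = 0 \<or> wt x mod 4 = 1}"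

lemma arith_key: "even (b::nat) \<Longrightarrow> t \<le> 3 \<Longrightarrow>
  ((b + (if b mod 4 = 2 then 3 - t else t)) mod 4 = 0 \<or> (b + (if b mod 4 = 2 then 3 - t else t)) mod 4 = 1) \<longleftrightarrow> t \<le> 1"
proof -
  assume e: "even b" and t: "t \<le> 3"
  have b: "b mod 4 = 0 \<or> b mod 4 = 2" using e by presburger
  have t4: "t = 0 \<or> t = 1 \<or> t = 2 \<or> t = 3" using t by auto
  have m: "(b + s) mod 4 = (b mod 4 + s) mod 4" for s :: nat by (simp add: mod_add_left_eq)
  show ?thesis using b t4 by (elim disjE; simp; presburger)
qed

lemma wt_sub: assumes x: "x \<in> subc n p" and lp: "length p = n"
  shows "wt x = beta p + card {i \<in> freep p. x!i}"
proof -
  have lx: "length x = n" using x subc_len by blast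
  have "{i. i < length x \<and> x!i} = {i. i < length p \<and> p!i = Some True} \<union> {i \<in> freep p. x!i}"
  proof (intro set_eqI iffI)
    fix i assume "i \<in> {i. i < length x \<and> x!i}"
    then have i: "i < n" "x!i" using lx by auto
    show "i \<in> {i. i < length p \<and> p!i = Some True} \<union> {i \<in> freep p. x!i}"
    proof (cases "p!i")
      case None then show ?thesis using i lp by (auto simp: freep_def)
    next
      case (Some bb) then have "x!i = bb" using x i by (auto simp: subc_def)
      then show ?thesis using i lp Some by auto
    qed
  next
    fix i assume "i \<in> {i. i < length p \<and> p!i = Some True} \<union> {i \<in> freep p. x!i}"
    then show "i \<in> {i. i < length x \<and> x!i}" using x lx lp by (auto simp: subc_def freep_def)
  qed
  moreover have "{i. i < length p \<and> p!i = Some True} \<inter> {i \<in> freep p. x!i} = {}"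
    by (auto simp: freep_def)
  ultimately show ?thesis unfolding wt_def beta_def by (simp add: card_Un_disjoint)
qed

lemma star_S0: assumes p: "p \<in> pats n 3" and e: "even (beta p)"
  shows "star n p (S0 n)"
proof -
  have lp: "length p = n" and c3: "card (freep p) = 3" using p by (auto simp: pats_def)
  define c where "c = (beta p mod 4 = 2)"
  define v where "v = fill p c"
  have vC: "v \<in> subc n p" using fill_in[OF lp] by (simp add: v_def)
  have lv: "length v = n" using vC subc_len by blast
  let ?t = "\<lambda>x. card {i \<in> freep p. x!i \<noteq> c}"
  have dset: "{i. i < n \<and> v!i \<noteq> x!i} = {i \<in> freep p. x!i \<noteq> c}" if x: "x \<in> subc n p" for x
  proof (intro set_eqI iffI)
    fix i assume "i \<in> {i. i < n \<and> v!i \<noteq> x!i}"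
    then have i: "i < n" "v!i \<noteq> x!i" by auto
    show "i \<in> {i \<in> freep p. x!i \<noteq> c}"
    proof (cases "p!i")
      case None then show ?thesis using i lp by (auto simp: freep_def v_def nth_fill)
    next
      case (Some bb) then have "x!i = bb" "v!i = bb" using x vC i by (auto simp: subc_def)
      then show ?thesis using i by simp
    qed
  next
    fix i assume "i \<in> {i \<in> freep p. x!i \<noteq> c}"
    then show "i \<in> {i. i < n \<and> v!i \<noteq> x!i}" using lp by (auto simp: freep_def v_def nth_fill)
  qed
  have t3: "?t x \<le> 3" for x using c3 card_mono[of "freep p" "{i \<in> freep p. x!i \<noteq> c}"] by auto
  have cnt: "card {i \<in> freep p. x!i} = (if c then 3 - ?t x else ?t x)" for x
  proof (cases c)
    case True
    have "{i \<in> freep p. x!i} = freep p - {i \<in> freep p. x!i \<noteq> c}" using True by auto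
    then show ?thesis using True c3 by (simp add: card_Diff_subset)
  next
    case False
    then show ?thesis by simp
  qed
  have memS: "x \<in> S0 n \<longleftrightarrow> ?t x \<le> 1" if x: "x \<in> subc n p" for x
  proof -
    have "x \<in> cube n" using x by (simp add: subc_def)
    then have "x \<in> S0 n \<longleftrightarrow> wt x mod 4 = 0 \<or> wt x mod 4 = 1" by (simp add: S0_def)
    also have "wt x = beta p + (if beta p mod 4 = 2 then 3 - ?t x else ?t x)"
      using wt_sub[OF x lp] cnt[of x] by (simp add: c_def)
    finally show ?thesis using arith_key[OF e t3[of x]] by simp
  qed
  have t01: "?t x \<le> 1 \<longleftrightarrow> x = v \<or> (\<exists>i\<in>freep p. x = flip v i)" if x: "x \<in> subc n p" for x
  proof -
    have xc: "x \<in> cube n" "v \<in> cube n" using x vC by (auto simp: subc_def)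
    have fin: "finite {i \<in> freep p. x!i \<noteq> c}" by simp
    have "?t x = 0 \<longleftrightarrow> x = v"
    proof
      assume "?t x = 0"
      then have "{i. i < n \<and> v!i \<noteq> x!i} = {}" using dset[OF x] fin by simp
      then show "x = v" using xc by (intro nth_equalityI) (auto simp: cube_def)
    qed (use dset[OF x] in auto)
    moreover have "?t x = 1 \<longleftrightarrow> (\<exists>i\<in>freep p. x = flip v i)"
    proof -
      have "?t x = 1 \<longleftrightarrow> adj n v x" unfolding adj_def using dset[OF x] by simp
      also have "\<dots> \<longleftrightarrow> (\<exists>i<n. x = flip v i)" using adj_iff[OF xc(2) xc(1)] .
      also have "\<dots> \<longleftrightarrow> (\<exists>i\<in>freep p. x = flip v i)"
        using flip_in_subc[OF vC] x lp by (auto simp: freep_def)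
      finally show ?thesis .
    qed
    ultimately show ?thesis by linarith
  qed
  have "S0 n \<inter> subc n p = insert v (flip v ` freep p)"
  proof (intro set_eqI iffI)
    fix x assume "x \<in> S0 n \<inter> subc n p"
    then show "x \<in> insert v (flip v ` freep p)" using memS t01 by blast
  next
    fix x assume h: "x \<in> insert v (flip v ` freep p)"
    then have "x \<in> subc n p" using vC flip_in_subc[OF vC] lp by (auto simp: freep_def)
    then show "x \<in> S0 n \<inter> subc n p" using memS t01 h by blast
  qed
  then show ?thesis unfolding star_def using vC by blast
qed

lemma beta_Cons: "beta (z # p) = (if z = Some True then Suc (beta p) else beta p)"
proof -
  have "{i. i < length (z # p) \<and> (z # p)!i = Some True} = (if z = Some True then insert 0 (Suc ` {i. i < length p \<and> p!i = Some True}) else Suc ` {i. i < length p \<and> p!i = Some True})"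
    (is "?L = ?R")
  proof (rule set_eqI)
    fix i show "i \<in> ?L \<longleftrightarrow> i \<in> ?R" by (cases i) (simp_all add: inj_image_mem_iff)
  qed
  then show ?thesis unfolding beta_def by (simp add: card_image card_insert_if)
qed

lemma Cons_mem_image: "(a # p \<in> Cons b ` X) \<longleftrightarrow> a = b \<and> p \<in> X"
  by auto

lemma Nil_mem_image: "[] \<notin> Cons b ` X"
  by auto

lemma mem_pats_Cons: "z # p \<in> pats (Suc n) k \<longleftrightarrow> length p = n \<and> card (freep (z # p)) = k"
  by (simp add: pats_def)

lemma card_pats_Suc: "card (pats (Suc n) k) = (if k = 0 then 0 else card (pats n (k - 1))) + 2 * card (pats n k)"
proof -
  have c2: "card (Cons (Some True) ` pats n k \<union> Cons (Some False) ` pats n k) = 2 * card (pats n k)"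
    by (subst card_Un_disjoint) (auto simp: finite_pats card_image)
  show ?thesis
  proof (cases "k = 0")
    case True then show ?thesis using c2 by (simp add: pats_Suc)
  next
    case False
    have "card (pats (Suc n) k) = card (Cons None ` pats n (k - 1) \<union> (Cons (Some True) ` pats n k \<union> Cons (Some False) ` pats n k))"
      unfolding pats_Suc using False by (simp add: Un_assoc)
    also have "\<dots> = card (pats n (k - 1)) + 2 * card (pats n k)"
      by (subst card_Un_disjoint) (auto simp: finite_pats c2 card_image)
    finally show ?thesis using False by simp
  qed
qed

lemma ev_count: "card (pats n k) \<le> 2 * card {p \<in> pats n k. even (beta p)}"
proof (induction n arbitrary: k)
  case 0
  have "{p \<in> pats 0 k. even (beta p)} = pats 0 k" by (auto simp: pats_0 beta_def)
  then show ?case by (simp add: pats_0)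
next
  case (Suc n)
  let ?E = "\<lambda>j. {p \<in> pats n j. even (beta p)}"
  let ?O = "\<lambda>j. {p \<in> pats n j. odd (beta p)}"
  have fin: "finite (?E j)" "finite (?O j)" for j using finite_pats by simp_all
  have EO: "card (?E j) + card (?O j) = card (pats n j)" for j
  proof -
    have "pats n j = ?E j \<union> ?O j" by auto
    moreover have "?E j \<inter> ?O j = {}" by auto
    ultimately show ?thesis using card_Un_disjoint[OF fin(1)[of j] fin(2)[of j]] by simp
  qed
  have dec: "{p \<in> pats (Suc n) k. even (beta p)} = ((if k = 0 then {} else Cons None ` ?E (k - 1))
     \<union> Cons (Some False) ` ?E k) \<union> Cons (Some True) ` ?O k" (is "?L = ?R")
  proof (rule set_eqI)
    fix x show "x \<in> ?L \<longleftrightarrow> x \<in> ?R"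
    proof (cases x)
      case Nil then show ?thesis by (simp add: pats_def Nil_mem_image)
    next
      case (Cons z p')
      show ?thesis unfolding Cons
        by (cases z) (auto simp: Cons_mem_image mem_pats_Cons card_freep_Cons beta_Cons pats_def)
    qed
  qed
  have c1: "card (Cons (Some False) ` ?E k \<union> Cons (Some True) ` ?O k) = card (pats n k)"
    using EO[of k] by (subst card_Un_disjoint) (auto simp: fin card_image)
  have cE: "card {p \<in> pats (Suc n) k. even (beta p)} = (if k = 0 then 0 else card (?E (k - 1))) + card (pats n k)"
  proof (cases "k = 0")
    case True then show ?thesis using c1 dec by simp
  next
    case False
    have "{p \<in> pats (Suc n) k. even (beta p)} = Cons None ` ?E (k - 1) \<union> (Cons (Some False) ` ?E k \<union> Cons (Some True) ` ?O k)"
      unfolding dec using False by (simp add: Un_assoc)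
    also have "card \<dots> = card (?E (k - 1)) + card (pats n k)"
      using c1 by (subst card_Un_disjoint) (auto simp: fin card_image)
    finally show ?thesis using False by simp
  qed
  show ?case using cE card_pats_Suc[of n k] Suc.IH[of "k - 1"] by auto

qed



lemma S0_cube: "S0 n \<subseteq> cube n" by (auto simp: S0_def)

lemma lower: "card (pats n 3) \<le> 2 * Lambda_set n W12 (S0 n)"
proof -
  have "{p \<in> pats n 3. even (beta p)} \<subseteq> {p \<in> pats n 3. star n p (S0 n)}"
    using star_S0 by auto
  then have "card {p \<in> pats n 3. even (beta p)} \<le> card {p \<in> pats n 3. star n p (S0 n)}"
    by (rule card_mono[rotated]) (simp add: finite_pats)
  then show ?thesis using ev_count[of n 3] by (simp add: Lambda_set_eq)
qed

lemma Lambda_eq: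
  assumes "\<And>S. S \<subseteq> cube n \<Longrightarrow> Lambda_set n W12 S \<le> Lambda_set n W12 (S0 n)"
  shows "Lambda W12 n = Lambda_set n W12 (S0 n)"
proof -
  let ?M = "{Lambda_set n W12 S | S. S \<subseteq> cube n}"
  have "?M = (\<lambda>S. Lambda_set n W12 S) ` Pow (cube n)" by auto
  then have fin: "finite ?M" using finite_cube by simp
  show ?thesis unfolding Lambda_def
    by (rule Max_eqI[OF fin]) (use assms S0_cube in auto)
qed

theorem theorem1p2:
  shows "Lambda W12 3 = 1 \<and>
    (\<forall>n::nat. n \<ge> 4 \<longrightarrow> real (Lambda W12 n) = 1/2 * real (n choose 3) * 2 ^ (n - 3))"
proof
  have P3: "card (pats 3 3) = 1" by (simp add: card_pats)
  have le1: "Lambda_set 3 W12 S \<le> 1" for S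
  proof -
    have "card {p \<in> pats 3 3. star 3 p S} \<le> card (pats 3 3)"
      by (rule card_mono) (auto simp: finite_pats)
    then show ?thesis using P3 by (simp add: Lambda_set_eq)
  qed
  have ge1: "1 \<le> Lambda_set 3 W12 (S0 3)" using lower[of 3] P3 by simp
  have "Lambda W12 3 = Lambda_set 3 W12 (S0 3)"
  proof (rule Lambda_eq)
    fix S :: "bool list set"
    show "Lambda_set 3 W12 S \<le> Lambda_set 3 W12 (S0 3)" using le1[of S] ge1 by linarith
  qed
  then show "Lambda W12 3 = 1" using le1[of "S0 3"] ge1 by simp
next
  show "\<forall>n::nat. n \<ge> 4 \<longrightarrow> real (Lambda W12 n) = 1/2 * real (n choose 3) * 2 ^ (n - 3)"
  proof (intro allI impI)
    fix n :: nat assume n: "n \<ge> 4"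
    have up: "2 * Lambda_set n W12 S \<le> card (pats n 3)" for S
      using upper[OF n, of S] by (simp add: Lambda_set_eq)
    have lo: "card (pats n 3) \<le> 2 * Lambda_set n W12 (S0 n)" by (rule lower)
    have "Lambda W12 n = Lambda_set n W12 (S0 n)"
    proof (rule Lambda_eq)
      fix S :: "bool list set"
      show "Lambda_set n W12 S \<le> Lambda_set n W12 (S0 n)" using up[of S] lo by linarith
    qed
    moreover have "2 * Lambda_set n W12 (S0 n) = (n choose 3) * 2 ^ (n - 3)"
      using up[of "S0 n"] lo by (simp add: card_pats)
    ultimately have "2 * real (Lambda W12 n) = real (n choose 3) * 2 ^ (n - 3)"
      by (metis of_nat_mult of_nat_numeral of_nat_power)
    then show "real (Lambda W12 n) = 1/2 * real (n choose 3) * 2 ^ (n - 3)" by simp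
  qed
qed


end
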